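(* Let $p \geq 4$ and $q \geq 4$ be integers and let $L$ be the Laplacian of the graph $K_p \oplus C_q$, with eigenvalues $\lambda_1(L) \geq \lambda_2(L) \geq \dots \geq \lambda_{p+q-1}(L)$. Let $\lambda_1(L_{C_q})$ denote the largest eigenvalue of the Laplacian of the path graph on $q-1$ vertices. Then $\lambda_1(L) \in [p,p+2]$; $\lambda_j(L) = p$ for all $j \in \{2,\ldots,p-1\}$; $\lambda_p(L) \in (0, \min\{\lambda_1(L_{C_q})+2,\, p\})$ (an interval contained in $(0,p)$ if $p \geq 6$); and $\lambda_j(L) \in [0,4)$ for all $j \in \{p+1,\ldots,p+q-1\}$.
   Context: For integers $p \geq 3$, $q \geq 2$, the graph $K_p \oplus C_q$ has vertex set $\{-p+1,\ldots,0\} \cup \{1,\ldots,q-1\}$ (so $p+q-1$ vertices). Its edges are: every pair of distinct vertices in $\{-p+1,\ldots,0\}$ (a complete graph on $p$ vertices), the edge $\{0,1\}$, and the edges $\{j,j+1\}$ for $1 \leq j \leq q-2$ (a path on the $q-1$ vertices $1,\ldots,q-1$). The Laplacian $L$ of a graph is the matrix with $L_{ii}$ equal to the degree of vertex $i$, $L_{ij}=-1$ if $i \neq j$ are adjacent and $L_{ij}=0$ otherwise. Eigenvalues of a real symmetric matrix are listed with multiplicity in non-increasing order. *)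

theory Defs
  imports "Jordan_Normal_Form.Char_Poly"
begin

definition graph_laplacian :: "nat \<Rightarrow> (nat \<Rightarrow> nat \<Rightarrow> bool) \<Rightarrow> real mat" where
  "graph_laplacian n adj = mat n n (\<lambda>(i,j).
      if i = j then real (card {k. k < n \<and> k \<noteq> i \<and> adj i k})
      else if adj i j then -1 else 0)"

text \<open>Vertex set of K_p (+) C_q is {-p+1,...,0} union {1,...,q-1}; the matrix
  index i (0 <= i < p+q-1) corresponds to the vertex int i - int p + 1.\<close>
definition KC_vertex :: "nat \<Rightarrow> nat \<Rightarrow> int" where
  "KC_vertex p i = int i - int p + 1"

definition KC_adj_int :: "int \<Rightarrow> int \<Rightarrow> bool" where
  "KC_adj_int a b \<longleftrightarrow> a \<noteq> b \<and>
     ((a \<le> 0 \<and> b \<le> 0) \<or> {a, b} = {0, 1} \<or> (a \<ge> 1 \<and> b \<ge> 1 \<and> \<bar>a - b\<bar> = 1))"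

definition KC_laplacian :: "nat \<Rightarrow> nat \<Rightarrow> real mat" where
  "KC_laplacian p q = graph_laplacian (p + q - 1)
     (\<lambda>i j. KC_adj_int (KC_vertex p i) (KC_vertex p j))"

definition path_laplacian :: "nat \<Rightarrow> real mat" where
  "path_laplacian m = graph_laplacian m (\<lambda>i j. i + 1 = j \<or> j + 1 = i)"

definition eigenvalues_desc :: "real mat \<Rightarrow> real list" where
  "eigenvalues_desc A = (THE xs. sorted_wrt (\<ge>) xs \<and>
      char_poly A = (\<Prod>x\<leftarrow>xs. [:- x, 1:]))"

text \<open>lambda_j(A), 1-based.\<close>
definition eig :: "real mat \<Rightarrow> nat \<Rightarrow> real" where
  "eig A j = eigenvalues_desc A ! (j - 1)"

end

theory Submission
  imports Defs
begin

lemma mat_delete_last: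
  "mat_delete (mat (Suc n) (Suc n) f) n n = mat n n f"
  by (rule eq_matI) (auto simp: mat_delete_def)

lemma mat_delete_first:
  "mat_delete (mat (Suc n) (Suc n) f) 0 0 = mat n n (\<lambda>(i,j). f (Suc i, Suc j))"
  by (rule eq_matI) (auto simp: mat_delete_def)

lemma det_last_diag:
  fixes f g :: "nat \<times> nat \<Rightarrow> 'a :: comm_ring_1"
  assumes "\<And>i j. i \<le> n \<Longrightarrow> j \<le> n \<Longrightarrow> (i,j) \<noteq> (n,n) \<Longrightarrow> f (i,j) = g (i,j)"
  shows "det (mat (Suc n) (Suc n) f) = det (mat (Suc n) (Suc n) g) + (f (n,n) - g (n,n)) * det (mat n n g)"
proof -
  let ?F = "mat (Suc n) (Suc n) f" and ?G = "mat (Suc n) (Suc n) g"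
  have cof: "cofactor ?F n j = cofactor ?G n j" if "j < Suc n" for j
    unfolding cofactor_def mat_delete_def using assms that
    by (intro arg_cong2[where f="(*)"] refl arg_cong[where f=det] eq_matI) auto
  have "det ?F = (\<Sum>j<Suc n. ?F $$ (n,j) * cofactor ?F n j)"
    by (rule laplace_expansion_row) auto
  also have "\<dots> = (\<Sum>j<Suc n. ?G $$ (n,j) * cofactor ?G n j) + (f (n,n) - g (n,n)) * cofactor ?G n n"
    using cof assms by (simp add: algebra_simps lessThan_Suc)
  also have "(\<Sum>j<Suc n. ?G $$ (n,j) * cofactor ?G n j) = det ?G"
    by (rule laplace_expansion_row[symmetric]) auto
  also have "cofactor ?G n n = det (mat n n g)"
    unfolding cofactor_def mat_delete_last by (simp flip: power_add mult_2)
  finally show ?thesis .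
qed


lemma det_tail:
  fixes f :: "nat \<times> nat \<Rightarrow> 'a :: comm_ring_1"
  assumes r: "\<And>j. j < k \<Longrightarrow> f (Suc k, j) = 0"
    and c: "\<And>i. i < k \<Longrightarrow> f (i, Suc k) = 0"
  shows "det (mat (Suc (Suc k)) (Suc (Suc k)) f) =
    f (Suc k, Suc k) * det (mat (Suc k) (Suc k) f) - f (Suc k, k) * f (k, Suc k) * det (mat k k f)"
proof -
  let ?A = "mat (Suc (Suc k)) (Suc (Suc k)) f"
  define M where "M = mat_delete ?A (Suc k) k"
  have M: "M = mat (Suc k) (Suc k) (\<lambda>(i,j). f (i, if j < k then j else Suc j))"
    unfolding M_def by (rule eq_matI) (auto simp: mat_delete_def)
  have "det M = (\<Sum>i<Suc k. M $$ (i,k) * cofactor M i k)"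
    by (rule laplace_expansion_column) (auto simp: M)
  also have "\<dots> = M $$ (k,k) * cofactor M k k"
    by (simp add: lessThan_Suc M c)
  also have "cofactor M k k = det (mat k k f)"
  proof -
    have "mat_delete M k k = mat k k f"
      by (rule eq_matI) (auto simp: mat_delete_def M)
    then show ?thesis unfolding cofactor_def by (simp flip: mult_2)
  qed
  finally have dM: "det M = f (k, Suc k) * det (mat k k f)" by (simp add: M)
  have "det ?A = (\<Sum>j<Suc (Suc k). ?A $$ (Suc k,j) * cofactor ?A (Suc k) j)"
    by (rule laplace_expansion_row) auto
  also have "\<dots> = f (Suc k, k) * cofactor ?A (Suc k) k + f (Suc k, Suc k) * cofactor ?A (Suc k) (Suc k)"
    by (simp add: lessThan_Suc r)
  also have "cofactor ?A (Suc k) (Suc k) = det (mat (Suc k) (Suc k) f)"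
    unfolding cofactor_def mat_delete_last by (simp flip: power_add mult_2)
  also have "cofactor ?A (Suc k) k = - det M"
    unfolding cofactor_def M_def by simp
  finally show ?thesis using dM by (simp add: algebra_simps)
qed

lemma det_dense_aux:
  fixes a b :: "'a :: comm_ring_1"
  shows "det (mat (Suc n) (Suc n) (\<lambda>(i,j). if i = j \<and> i < n then a + b else b)) = a ^ n * b"
proof (induction n)
  case 0
  then show ?case by (simp add: det_single)
next
  case (Suc n)
  let ?f = "\<lambda>n (i,j). if i = j \<and> i < n then a + b else b"
  let ?A = "mat (Suc (Suc n)) (Suc (Suc n)) (?f (Suc n))"
  define B where "B = addrow (-1) 0 (Suc n) ?A"
  have dB: "det B = det ?A" unfolding B_def by (rule det_addrow) auto
  have B: "B = mat (Suc (Suc n)) (Suc (Suc n)) (\<lambda>(i,j). if i = 0 then (if j = 0 then a else 0) else ?f (Suc n) (i,j))"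
    unfolding B_def by (rule eq_matI) auto
  have "det B = (\<Sum>j<Suc (Suc n). B $$ (0,j) * cofactor B 0 j)"
    by (rule laplace_expansion_row) (auto simp: B)
  also have "\<dots> = a * cofactor B 0 0"
    by (subst sum.lessThan_Suc_shift) (simp add: B)
  also have "cofactor B 0 0 = det (mat (Suc n) (Suc n) (?f n))"
    unfolding cofactor_def B mat_delete_first by (auto intro!: arg_cong[where f=det] eq_matI)
  finally show ?case using dB Suc by simp
qed

lemma det_dense:
  fixes a b :: "'a :: comm_ring_1"
  shows "det (mat (Suc n) (Suc n) (\<lambda>(i,j). if i = j then a + b else b)) = a ^ n * (a + of_nat (Suc n) * b)"
proof (induction n)
  case 0
  then show ?case by (simp add: det_single)
next
  case (Suc n)
  have "det (mat (Suc (Suc n)) (Suc (Suc n)) (\<lambda>(i,j). if i = j then a + b else b)) =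
    det (mat (Suc (Suc n)) (Suc (Suc n)) (\<lambda>(i,j). if i = j \<and> i < Suc n then a + b else b)) + a * det (mat (Suc n) (Suc n) (\<lambda>(i,j). if i = j \<and> i < Suc n then a + b else b))"
    by (subst det_last_diag[where g = "\<lambda>(i,j). if i = j \<and> i < Suc n then a + b else b"]) auto
  also have "det (mat (Suc n) (Suc n) (\<lambda>(i,j). if i = j \<and> i < Suc n then a + b else b)) = det (mat (Suc n) (Suc n) (\<lambda>(i,j). if i = j then a + b else b))"
    by (auto intro!: arg_cong[where f=det] eq_matI)
  finally show ?case using Suc det_dense_aux[of "Suc n" a b]
    by (simp add: algebra_simps)
qed


definition Cinf :: "nat \<Rightarrow> nat \<times> nat \<Rightarrow> real poly" where
  "Cinf p = (\<lambda>(i,j). if i = j then (if i < p - 1 then [:-(real p - 1),1:] else if i = p - 1 then [:-real p,1:] else [:-2,1:])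
     else if (i < p \<and> j < p) \<or> (i+1 = j \<and> p \<le> j) \<or> (j+1 = i \<and> p \<le> i) then 1 else 0)"

fun Rp :: "nat \<Rightarrow> nat \<Rightarrow> real poly" where
  "Rp p 0 = [:-1,1:]"
| "Rp p (Suc 0) = [:1, -(real p + 1), 1:]"
| "Rp p (Suc (Suc n)) = [:-2,1:] * Rp p (Suc n) - Rp p n"

lemma poly_eqI: "(\<And>x. poly P x = poly Q x) \<Longrightarrow> P = (Q :: real poly)"
  using poly_eq_poly_eq_iff by blast

lemma induct2: "P 0 \<Longrightarrow> P (Suc 0) \<Longrightarrow> (\<And>n. P n \<Longrightarrow> P (Suc n) \<Longrightarrow> P (Suc (Suc n))) \<Longrightarrow> P n"
  by (induction n rule: nat_less_induct) (metis less_Suc_eq not0_implies_Suc)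

lemma det_Cinf:
  assumes p: "p \<ge> 2"
  shows "det (mat (p - 1 + k) (p - 1 + k) (Cinf p)) = [:-real p,1:] ^ (p - 2) * Rp p k"
proof (induction k rule: induct2)
  case 1
  have "mat (p - 1) (p - 1) (Cinf p) = mat (Suc (p - 2)) (Suc (p - 2)) (\<lambda>(i,j). if i = j then [:-real p,1:] + 1 else 1)"
    using p by (intro eq_matI) (auto simp: Cinf_def one_pCons)
  moreover have "[:-real p,1:] + of_nat (Suc (p - 2)) = [:-1, 1:]"
    using p by (intro poly_eqI) (simp add: of_nat_diff)
  ultimately show ?case by (simp add: det_dense)
next
  case 2
  let ?a = "[:-real p,1:]"
  let ?g = "(\<lambda>(i,j). if i = j then ?a + 1 else 1)"
  have e: "p - 1 + Suc 0 = Suc (p - 1)" using p by simp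
  have "det (mat (Suc (p - 1)) (Suc (p - 1)) (Cinf p)) = det (mat (Suc (p - 1)) (Suc (p - 1)) ?g) + (Cinf p (p-1,p-1) - ?g (p-1,p-1)) * det (mat (p - 1) (p - 1) ?g)"
    using p by (intro det_last_diag) (auto simp: Cinf_def one_pCons)
  also have "mat (Suc (p - 1)) (Suc (p - 1)) ?g = mat (Suc (Suc (p - 2))) (Suc (Suc (p - 2))) ?g"
    using p by (simp add: Suc_diff_Suc numeral_2_eq_2)
  also have "mat (p - 1) (p - 1) ?g = mat (Suc (p - 2)) (Suc (p - 2)) ?g"
    using p by (simp add: Suc_diff_Suc numeral_2_eq_2)
  finally have "det (mat (Suc (p - 1)) (Suc (p - 1)) (Cinf p)) =
     ?a ^ Suc (p - 2) * (?a + of_nat (Suc (Suc (p - 2)))) - ?a ^ (p - 2) * (?a + of_nat (Suc (p - 2)))"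
    unfolding det_dense by (simp add: Cinf_def)
  also have "\<dots> = ?a ^ (p - 2) * Rp p (Suc 0)"
    using p by (intro poly_eqI) (simp add: of_nat_diff algebra_simps)
  finally show ?case using e by simp
next
  case (3 n)
  have e: "p - 1 + Suc (Suc n) = Suc (Suc (p - 1 + n))" "p - 1 + Suc n = Suc (p - 1 + n)" using p by auto
  have "det (mat (p - 1 + Suc (Suc n)) (p - 1 + Suc (Suc n)) (Cinf p)) =
    Cinf p (Suc (p - 1 + n), Suc (p - 1 + n)) * det (mat (p - 1 + Suc n) (p - 1 + Suc n) (Cinf p))
     - Cinf p (Suc (p - 1 + n), p - 1 + n) * Cinf p (p - 1 + n, Suc (p - 1 + n)) * det (mat (p - 1 + n) (p - 1 + n) (Cinf p))"
    unfolding e by (rule det_tail) (auto simp: Cinf_def)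
  also have "\<dots> = [:-2,1:] * det (mat (p - 1 + Suc n) (p - 1 + Suc n) (Cinf p)) - det (mat (p - 1 + n) (p - 1 + n) (Cinf p))"
  proof -
    have s: "Suc (p - 1 + n) = p + n" using p by simp
    have "Cinf p (p + n, p + n) = [:-2,1:]" "Cinf p (p + n, p - 1 + n) = 1" "Cinf p (p - 1 + n, p + n) = 1"
      using p by (auto simp: Cinf_def)
    then show ?thesis unfolding s by simp
  qed
  finally show ?case using 3 by (simp add: algebra_simps)
qed


lemma KC_adj_nat:
  "KC_adj_int (KC_vertex p i) (KC_vertex p j) \<longleftrightarrow>
     i \<noteq> j \<and> ((i < p \<and> j < p) \<or> (i+1 = j \<and> p \<le> j) \<or> (j+1 = i \<and> p \<le> i))"
  unfolding KC_adj_int_def KC_vertex_def doubleton_eq_iff by auto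

lemma KC_deg:
  assumes p: "p \<ge> 2" and i: "i < p + m" and m: "m \<ge> 2"
  shows "card {k. k < p + m \<and> k \<noteq> i \<and> KC_adj_int (KC_vertex p i) (KC_vertex p k)} =
    (if i < p - 1 then p - 1 else if i = p - 1 then p else if i = p + m - 1 then 1 else 2)"
proof -
  let ?S = "{k. k < p + m \<and> k \<noteq> i \<and> KC_adj_int (KC_vertex p i) (KC_vertex p k)}"
  consider "i < p - 1" | "i = p - 1" | "i = p + m - 1" | "p \<le> i" "i < p + m - 1" using p i m by linarith
  then show ?thesis
  proof cases
    case 1
    then have "?S = {..<p} - {i}" using p m by (auto simp: KC_adj_nat)
    moreover have "card ({..<p} - {i}) = p - 1" using 1 by simp
    ultimately show ?thesis using 1 by simp
  next
    case 2
    then have "?S = insert p ({..<p} - {i})" using p m by (auto simp: KC_adj_nat)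
    moreover have "card (insert p ({..<p} - {i})) = p" using 2 p by simp
    ultimately show ?thesis using 2 by simp
  next
    case 3
    then have "?S = {i - 1}" using p m by (auto simp: KC_adj_nat)
    moreover have "\<not> i < p - 1" "i \<noteq> p - 1" using 3 p m by linarith+
    ultimately show ?thesis using 3 by simp
  next
    case 4
    then have "?S = {i - 1, i + 1}" using p m by (auto simp: KC_adj_nat)
    moreover have "\<not> i < p - 1" "i \<noteq> p - 1" "i \<noteq> p + m - 1" using 4 p m by linarith+
    ultimately show ?thesis by simp
  qed
qed

lemma char_poly_matrix_KC:
  assumes p: "p \<ge> 2" and m: "m \<ge> 2"
  shows "char_poly_matrix (KC_laplacian p (Suc m)) = mat (p + m) (p + m) (\<lambda>(i,j). if i = j \<and> i = p + m - 1 then [:-1,1:] else Cinf p (i,j))"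
proof (rule eq_matI)
  fix i j assume ij: "i < dim_row (mat (p + m) (p + m) (\<lambda>(i,j). if i = j \<and> i = p + m - 1 then [:-1,1:] else Cinf p (i,j)))"
     "j < dim_col (mat (p + m) (p + m) (\<lambda>(i,j). if i = j \<and> i = p + m - 1 then [:-1,1:] else Cinf p (i,j)))"
  then have ij: "i < p + m" "j < p + m" by auto
  have L: "KC_laplacian p (Suc m) $$ (i,j) = (if i = j then real (card {k. k < p + m \<and> k \<noteq> i \<and> KC_adj_int (KC_vertex p i) (KC_vertex p k)})
     else if KC_adj_int (KC_vertex p i) (KC_vertex p j) then -1 else 0)"
    using ij by (simp add: KC_laplacian_def graph_laplacian_def)
  have C: "char_poly_matrix (KC_laplacian p (Suc m)) $$ (i, j) = (if i = j then [:0,1:] else 0) + [:- (KC_laplacian p (Suc m) $$ (i,j)):]"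
    using ij by (simp add: char_poly_matrix_def KC_laplacian_def graph_laplacian_def)
  show "char_poly_matrix (KC_laplacian p (Suc m)) $$ (i, j) = mat (p + m) (p + m) (\<lambda>(i,j). if i = j \<and> i = p + m - 1 then [:-1,1:] else Cinf p (i,j)) $$ (i, j)"
  proof (cases "i = j")
    case True
    then show ?thesis unfolding C L using ij p m KC_deg[OF p ij(1) m]
      by (auto simp: Cinf_def of_nat_diff)
  next
    case False
    then show ?thesis unfolding C L using ij p m
      by (auto simp: Cinf_def KC_adj_nat one_pCons)
  qed
qed (auto simp: char_poly_matrix_def KC_laplacian_def graph_laplacian_def)

lemma char_poly_KC:
  assumes p: "p \<ge> 2" and m: "m \<ge> 2" and q: "q = Suc m"
  shows "char_poly (KC_laplacian p q) = [:-real p,1:] ^ (p - 2) * (Rp p (Suc m) + Rp p m)"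
proof -
  have e: "p + m = Suc (p - 1 + m)" using p by simp
  have "char_poly (KC_laplacian p q) = det (mat (Suc (p - 1 + m)) (Suc (p - 1 + m)) (\<lambda>(i,j). if i = j \<and> i = p + m - 1 then [:-1,1:] else Cinf p (i,j)))"
    unfolding char_poly_def q char_poly_matrix_KC[OF p m] e ..
  also have "\<dots> = det (mat (Suc (p - 1 + m)) (Suc (p - 1 + m)) (Cinf p)) + ([:-1,1:] - Cinf p (p - 1 + m, p - 1 + m)) * det (mat (p - 1 + m) (p - 1 + m) (Cinf p))"
    by (subst det_last_diag[where g="Cinf p"]) (use p m in auto)
  also have "Cinf p (p - 1 + m, p - 1 + m) = [:-2,1:]"
  proof -
    have "\<not> p - 1 + m < p - 1" "p - 1 + m \<noteq> p - 1" using p m by linarith+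
    then show ?thesis by (simp add: Cinf_def)
  qed
  also have "Suc (p - 1 + m) = p - 1 + Suc m" by simp
  finally have "char_poly (KC_laplacian p q) = det (mat (p - 1 + Suc m) (p - 1 + Suc m) (Cinf p)) + ([:-1,1:] - [:-2,1:]) * det (mat (p - 1 + m) (p - 1 + m) (Cinf p))" .
  then show ?thesis unfolding det_Cinf[OF p] by (simp add: algebra_simps)
qed


definition Pinf :: "nat \<times> nat \<Rightarrow> real poly" where
  "Pinf = (\<lambda>(i,j). if i = j then (if i = 0 then [:-1,1:] else [:-2,1:])
     else if i+1 = j \<or> j+1 = i then 1 else 0)"

fun Yp :: "nat \<Rightarrow> real poly" where
  "Yp 0 = 1"
| "Yp (Suc 0) = [:-1,1:]"
| "Yp (Suc (Suc n)) = [:-2,1:] * Yp (Suc n) - Yp n"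

lemma det_Pinf: "det (mat k k Pinf) = Yp k"
proof (induction k rule: induct2)
  case 1
  then show ?case by simp
next
  case 2
  then show ?case by (simp add: det_single Pinf_def)
next
  case (3 n)
  have "det (mat (Suc (Suc n)) (Suc (Suc n)) Pinf) =
    Pinf (Suc n, Suc n) * det (mat (Suc n) (Suc n) Pinf) - Pinf (Suc n, n) * Pinf (n, Suc n) * det (mat n n Pinf)"
    by (rule det_tail) (auto simp: Pinf_def)
  then show ?case using 3 by (simp add: Pinf_def)
qed

lemma path_deg:
  fixes i m :: nat
  assumes i: "i < m" and m: "m \<ge> 2"
  shows "card {k. k < m \<and> k \<noteq> i \<and> (i + 1 = k \<or> k + 1 = i)} = (if i = 0 \<or> i = m - 1 then 1 else 2)"
proof -
  let ?S = "{k. k < m \<and> k \<noteq> i \<and> (i + 1 = k \<or> k + 1 = i)}"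
  consider "i = 0" | "i = m - 1" "i \<noteq> 0" | "0 < i" "i < m - 1" using i m by linarith
  then show ?thesis
  proof cases
    case 1
    then have "?S = {1}" using m by auto
    then show ?thesis using 1 by simp
  next
    case 2
    then have "?S = {i - 1}" using m by auto
    then show ?thesis using 2 by simp
  next
    case 3
    then have "?S = {i - 1, i + 1}" using m by auto
    then show ?thesis using 3 by simp
  qed
qed

lemma char_poly_path:
  assumes m: "m \<ge> 2"
  shows "char_poly (path_laplacian m) = Yp m + Yp (m - 1)"
proof -
  have cpm: "char_poly_matrix (path_laplacian m) = mat m m (\<lambda>(i,j). if i = j \<and> i = m - 1 then [:-1,1:] else Pinf (i,j))"
  proof (rule eq_matI)
    fix i j assume "i < dim_row (mat m m (\<lambda>(i,j). if i = j \<and> i = m - 1 then [:-1,1:] else Pinf (i,j)))"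
       "j < dim_col (mat m m (\<lambda>(i,j). if i = j \<and> i = m - 1 then [:-1,1:] else Pinf (i,j)))"
    then have ij: "i < m" "j < m" by auto
    show "char_poly_matrix (path_laplacian m) $$ (i, j) = mat m m (\<lambda>(i,j). if i = j \<and> i = m - 1 then [:-1,1:] else Pinf (i,j)) $$ (i, j)"
      using ij m path_deg[OF ij(1) m]
      by (auto simp: char_poly_matrix_def path_laplacian_def graph_laplacian_def Pinf_def one_pCons)
  qed (auto simp: char_poly_matrix_def path_laplacian_def graph_laplacian_def)
  have e: "m = Suc (m - 1)" using m by simp
  have "char_poly (path_laplacian m) = det (mat (Suc (m - 1)) (Suc (m - 1)) (\<lambda>(i,j). if i = j \<and> i = m - 1 then [:-1,1:] else Pinf (i,j)))"
    unfolding char_poly_def cpm using e by simp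
  also have "\<dots> = det (mat (Suc (m - 1)) (Suc (m - 1)) Pinf) + ([:-1,1:] - Pinf (m - 1, m - 1)) * det (mat (m - 1) (m - 1) Pinf)"
    by (subst det_last_diag[where g="Pinf"]) auto
  also have "Pinf (m - 1, m - 1) = [:-2,1:]" using m by (simp add: Pinf_def)
  finally show ?thesis unfolding det_Pinf using e by simp
qed

lemma cos3: "cos (3 * x) = cos x * (1 - 4 * sin x ^ 2)" for x :: real
proof -
  have "cos (3 * x) = cos (x + 2 * x)" by simp
  also have "\<dots> = cos x * cos (2 * x) - sin x * sin (2 * x)" by (rule cos_add)
  also have "\<dots> = cos x * (1 - 4 * sin x ^ 2)"
    unfolding cos_double_sin sin_double by (simp add: power2_eq_square algebra_simps)
  finally show ?thesis .
qed

lemma trig_rec: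
  fixes phi c :: real
  shows "(-1) ^ Suc (Suc k) * cos (real (2 * Suc (Suc k) + 1) * phi + c) =
    (4 * sin phi ^ 2 - 2) * ((-1) ^ Suc k * cos (real (2 * Suc k + 1) * phi + c)) - (-1) ^ k * cos (real (2 * k + 1) * phi + c)"
proof -
  define A where "A = real (2 * Suc k + 1) * phi + c"
  have 1: "real (2 * Suc (Suc k) + 1) * phi + c = A + 2 * phi" unfolding A_def by (simp add: algebra_simps)
  have 2: "real (2 * k + 1) * phi + c = A - 2 * phi" unfolding A_def by (simp add: algebra_simps)
  have F: "cos (A + 2 * phi) = (4 * sin phi ^ 2 - 2) * (- cos A) - cos (A - 2 * phi)"
    unfolding cos_add cos_diff cos_double_sin by (simp add: algebra_simps)
  show ?thesis unfolding 1 2 A_def[symmetric] F by (simp add: algebra_simps)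
qed

lemma rec_eq:
  fixes s t :: "nat \<Rightarrow> real"
  assumes "\<And>k. s (Suc (Suc k)) = c * s (Suc k) - s k" "\<And>k. t (Suc (Suc k)) = c * t (Suc k) - t k"
    "s 0 = t 0" "s 1 = t 1"
  shows "s k = t k"
  by (induction k rule: induct2) (use assms in auto)

lemma Yp_trig:
  "cos phi * poly (Yp k) (4 * sin phi ^ 2) = (-1) ^ k * cos (real (2 * k + 1) * phi)"
proof -
  have "cos phi * poly (Yp k) (4 * sin phi ^ 2) = (-1) ^ k * cos (real (2 * k + 1) * phi + 0)"
  proof (rule rec_eq[where c = "4 * sin phi ^ 2 - 2" and s = "\<lambda>k. cos phi * poly (Yp k) (4 * sin phi ^ 2)" and t = "\<lambda>k. (-1) ^ k * cos (real (2 * k + 1) * phi + 0)"])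
    fix k show "cos phi * poly (Yp (Suc (Suc k))) (4 * sin phi ^ 2) =
      (4 * sin phi ^ 2 - 2) * (cos phi * poly (Yp (Suc k)) (4 * sin phi ^ 2)) - cos phi * poly (Yp k) (4 * sin phi ^ 2)"
      by (simp add: algebra_simps)
  next
    fix k show "(-1) ^ Suc (Suc k) * cos (real (2 * Suc (Suc k) + 1) * phi + 0) =
       (4 * sin phi ^ 2 - 2) * ((-1) ^ Suc k * cos (real (2 * Suc k + 1) * phi + 0)) - (-1) ^ k * cos (real (2 * k + 1) * phi + 0)"
      by (rule trig_rec)
  next
    show "cos phi * poly (Yp 0) (4 * sin phi ^ 2) = (-1) ^ 0 * cos (real (2 * 0 + 1) * phi + 0)" by simp
  next
    show "cos phi * poly (Yp 1) (4 * sin phi ^ 2) = (-1) ^ 1 * cos (real (2 * 1 + 1) * phi + 0)"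
      using cos3[of phi] by (simp add: algebra_simps)
  qed
  then show ?thesis by simp
qed

definition Gm :: "nat \<Rightarrow> nat \<Rightarrow> real poly" where
  "Gm p m = Rp p (Suc m) + Rp p m"

lemma Gm_trig:
  fixes phi :: real
  defines "x \<equiv> 4 * sin phi ^ 2"
  shows "cos phi * poly (Gm p m) x = (-1) ^ m * ((x^2 - (real p + 1) * x + 1) * cos (real (2 * m + 1) * phi)
     + (x - 1) * cos (real (2 * m + 1) * phi - 2 * phi))"
proof -
  let ?r = "x^2 - (real p + 1) * x + 1"
  have "cos phi * poly (Gm p m) x = ?r * ((-1) ^ m * cos (real (2 * m + 1) * phi + 0)) + (x - 1) * ((-1) ^ m * cos (real (2 * m + 1) * phi + (- 2 * phi)))"
  proof (rule rec_eq[where c = "x - 2" and s = "\<lambda>k. cos phi * poly (Gm p k) x" and t = "\<lambda>m. ?r * ((-1) ^ m * cos (real (2 * m + 1) * phi + 0)) + (x - 1) * ((-1) ^ m * cos (real (2 * m + 1) * phi + (- 2 * phi)))"])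
    fix k show "cos phi * poly (Gm p (Suc (Suc k))) x =
      (x - 2) * (cos phi * poly (Gm p (Suc k)) x) - cos phi * poly (Gm p k) x"
      by (simp add: Gm_def algebra_simps)
  next
    fix k show "?r * ((-1) ^ Suc (Suc k) * cos (real (2 * Suc (Suc k) + 1) * phi + 0)) + (x - 1) * ((-1) ^ Suc (Suc k) * cos (real (2 * Suc (Suc k) + 1) * phi + (- 2 * phi))) =
      (x - 2) * (?r * ((-1) ^ Suc k * cos (real (2 * Suc k + 1) * phi + 0)) + (x - 1) * ((-1) ^ Suc k * cos (real (2 * Suc k + 1) * phi + (- 2 * phi)))) -
      (?r * ((-1) ^ k * cos (real (2 * k + 1) * phi + 0)) + (x - 1) * ((-1) ^ k * cos (real (2 * k + 1) * phi + (- 2 * phi))))"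
      unfolding trig_rec x_def by (simp add: algebra_simps)
  next
    show "cos phi * poly (Gm p 0) x = ?r * ((-1) ^ 0 * cos (real (2 * 0 + 1) * phi + 0)) + (x - 1) * ((-1) ^ 0 * cos (real (2 * 0 + 1) * phi + (- 2 * phi)))"
      by (simp add: Gm_def algebra_simps power2_eq_square)
  next
    have a: "cos (real (2 * 1 + 1) * phi + (- 2 * phi)) = cos phi" by simp
    have b: "cos (real (2 * 1 + 1) * phi + 0) = cos phi * (1 - x)" using cos3[of phi] by (simp add: x_def)
    show "cos phi * poly (Gm p 1) x = ?r * ((-1) ^ 1 * cos (real (2 * 1 + 1) * phi + 0)) + (x - 1) * ((-1) ^ 1 * cos (real (2 * 1 + 1) * phi + (- 2 * phi)))"
      unfolding a b by (simp add: Gm_def algebra_simps power2_eq_square numeral_eq_Suc)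
  qed
  then show ?thesis by (simp add: algebra_simps)
qed

lemma path_trig:
  fixes phi :: real
  assumes m: "m \<ge> 1"
  shows "cos phi * poly (Yp m + Yp (m - 1)) (4 * sin phi ^ 2) = (-1) ^ m * (cos (real (2 * m + 1) * phi) - cos (real (2 * m + 1) * phi - 2 * phi))"
proof -
  have e: "real (2 * (m - 1) + 1) * phi = real (2 * m + 1) * phi - 2 * phi" using m by (simp add: of_nat_diff algebra_simps)
  have s: "(-1::real) ^ (m - 1) = - ((-1) ^ m)" using m by (cases m) auto
  show ?thesis using Yp_trig[of phi m] Yp_trig[of phi "m - 1"] unfolding e s by (simp add: algebra_simps)
qed


lemma angle_facts:
  fixes a :: real
  assumes "0 < a" "a < pi / 2"
  shows "0 < cos a" "0 < sin a" "sin a < 1" "0 < 4 * sin a ^ 2" "4 * sin a ^ 2 < 4"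
proof -
  show "0 < cos a" "0 < sin a" using assms by (auto intro: cos_gt_zero sin_gt_zero2)
  moreover have "sin a < sin (pi / 2)" using assms by (intro sin_monotone_2pi) auto
  ultimately show "sin a < 1" "0 < 4 * sin a ^ 2" "4 * sin a ^ 2 < 4"
    by (auto simp: power_less_one_iff)
qed

lemma sin_sq_mono:
  fixes a b :: real
  assumes "0 \<le> a" "a < b" "b \<le> pi / 2"
  shows "4 * sin a ^ 2 < 4 * sin b ^ 2"
proof -
  have "sin a < sin b" using assms by (intro sin_monotone_2pi) auto
  moreover have "0 \<le> sin a" using assms by (intro sin_ge_zero) auto
  ultimately show ?thesis by (simp add: power_strict_mono)
qed

definition xg :: "nat \<Rightarrow> nat \<Rightarrow> real" where
  "xg m j = 4 * sin (real j * pi / real (2 * m + 1)) ^ 2"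

lemma xg_angle:
  assumes "1 \<le> j" "j \<le> m"
  shows "0 < real j * pi / real (2 * m + 1)" "real j * pi / real (2 * m + 1) < pi / 2"
proof -
  show "0 < real j * pi / real (2 * m + 1)" using assms by simp
  have "real j * 2 < real (2 * m + 1)" using assms by simp
  then have "real j * pi * 2 < real (2 * m + 1) * pi" by simp
  then show "real j * pi / real (2 * m + 1) < pi / 2" by (simp add: field_simps)
qed

lemma xg_bounds:
  assumes "1 \<le> j" "j \<le> m"
  shows "0 < xg m j" "xg m j < 4"
  using angle_facts[OF xg_angle[OF assms]] unfolding xg_def by auto

lemma xg_mono:
  assumes "1 \<le> j" "j < k" "k \<le> m"
  shows "xg m j < xg m k"
  unfolding xg_def
proof (rule sin_sq_mono)
  show "0 \<le> real j * pi / real (2 * m + 1)" by simp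
  show "real j * pi / real (2 * m + 1) < real k * pi / real (2 * m + 1)" using assms by (simp add: divide_strict_right_mono)
  show "real k * pi / real (2 * m + 1) \<le> pi / 2" using xg_angle[of k m] assms by simp
qed

lemma G_sample:
  assumes "1 \<le> j" "j \<le> m"
  shows "cos (real j * pi / real (2 * m + 1)) * poly (Gm p m) (xg m j) = (-1) ^ (m + j) * (xg m j * (xg m j - 2 * real p + 1) / 2)"
proof -
  define phi where "phi = real j * pi / real (2 * m + 1)"
  define x where "x = xg m j"
  have x: "x = 4 * sin phi ^ 2" unfolding x_def xg_def phi_def ..
  have e: "real (2 * m + 1) * phi = real j * pi" unfolding phi_def by simp
  have c2: "cos (2 * phi) = 1 - x / 2" unfolding x cos_double_sin by simp
  have "cos (real j * pi - 2 * phi) = (-1) ^ j * cos (2 * phi)" unfolding cos_diff by simp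
  then have "cos phi * poly (Gm p m) x = (-1) ^ m * ((x^2 - (real p + 1) * x + 1) * (-1) ^ j + (x - 1) * ((-1) ^ j * (1 - x / 2)))"
    using Gm_trig[of phi p m] unfolding x[symmetric] e c2 by simp
  also have "\<dots> = (-1) ^ (m + j) * (x * (x - 2 * real p + 1) / 2)"
    by (simp add: power_add power2_eq_square field_simps)
  finally show ?thesis unfolding phi_def x_def .
qed

definition yp :: "nat \<Rightarrow> nat \<Rightarrow> real" where
  "yp m j = 4 * sin (real (2 * j + 1) * pi / real (4 * m)) ^ 2"

lemma yp_angle:
  assumes "j < m"
  shows "0 < real (2 * j + 1) * pi / real (4 * m)" "real (2 * j + 1) * pi / real (4 * m) < pi / 2"
proof -
  show "0 < real (2 * j + 1) * pi / real (4 * m)" using assms by simp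
  have "real (2 * j + 1) * 2 < real (4 * m)" using assms by simp
  then have "real (2 * j + 1) * pi * 2 < real (4 * m) * pi" by simp
  then show "real (2 * j + 1) * pi / real (4 * m) < pi / 2" using assms by (simp add: field_simps)
qed

lemma yp_mono:
  assumes "j < k" "k < m"
  shows "yp m j < yp m k"
  unfolding yp_def
proof (rule sin_sq_mono)
  show "0 \<le> real (2 * j + 1) * pi / real (4 * m)" by simp
  show "real (2 * j + 1) * pi / real (4 * m) < real (2 * k + 1) * pi / real (4 * m)" using assms by (simp add: divide_strict_right_mono)
  show "real (2 * k + 1) * pi / real (4 * m) \<le> pi / 2" using yp_angle[of k m] assms by simp
qed

lemma yp_pos: "j < m \<Longrightarrow> 0 < yp m j"
  using angle_facts(4)[OF yp_angle] unfolding yp_def by auto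

lemma P_sample:
  assumes "j < m"
  shows "cos (real (2 * j + 1) * pi / real (4 * m)) * poly (Yp m + Yp (m - 1)) (yp m j) = (-1) ^ (m + j + 1) * (2 * sin (real (2 * j + 1) * pi / real (4 * m)))"
proof -
  define psi where "psi = real (2 * j + 1) * pi / real (4 * m)"
  define B where "B = real j * pi + pi / 2"
  have m: "m \<ge> 1" using assms by simp
  have e1: "real (2 * m + 1) * psi = B + psi" unfolding psi_def B_def using m by (simp add: field_simps)
  have e2: "real (2 * m + 1) * psi - 2 * psi = B - psi" unfolding psi_def B_def using m by (simp add: field_simps)
  have e3: "B + psi - 2 * psi = B - psi" by simp
  have sB: "sin B = (-1) ^ j" unfolding B_def sin_add by simp
  have d: "cos (B + psi) - cos (B - psi) = - 2 * sin B * sin psi" unfolding cos_add cos_diff by simp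
  have "cos psi * poly (Yp m + Yp (m - 1)) (yp m j) = (-1) ^ m * (cos (B + psi) - cos (B - psi))"
    using path_trig[OF m, of psi] unfolding e1 yp_def psi_def[symmetric] e3 .
  also have "\<dots> = (-1) ^ (m + j + 1) * (2 * sin psi)" unfolding d sB by (simp add: power_add)
  finally show ?thesis unfolding psi_def .
qed


lemma Rp_0: "poly (Rp p n) 0 = (-1) ^ (n + 1)"
  by (induction n rule: induct2) auto

lemma Rp_deriv_0: "poly (pderiv (Rp p n)) 0 = (-1) ^ n * (real n ^ 2 + (2 * real p - 1) * real n + 2) / 2"
proof (induction n rule: induct2)
  case 1
  then show ?case by (simp add: pderiv_pCons)
next
  case 2
  then show ?case by (simp add: pderiv_pCons)
next
  case (3 n)
  have "poly (pderiv (Rp p (Suc (Suc n)))) 0 = poly (Rp p (Suc n)) 0 - 2 * poly (pderiv (Rp p (Suc n))) 0 - poly (pderiv (Rp p n)) 0"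
    by (simp add: pderiv_mult pderiv_diff pderiv_pCons pderiv_smult)
  also have "\<dots> = (-1) ^ Suc (Suc n) * (real (Suc (Suc n)) ^ 2 + (2 * real p - 1) * real (Suc (Suc n)) + 2) / 2"
    unfolding 3 Rp_0 by (simp add: power2_eq_square field_simps)
  finally show ?case .
qed

lemma Gm_0: "poly (Gm p m) 0 = 0"
  by (simp add: Gm_def Rp_0)

lemma Gm_deriv_0: "poly (pderiv (Gm p m)) 0 = (-1) ^ (m + 1) * (real m + real p)"
  unfolding Gm_def pderiv_add poly_add Rp_deriv_0 by (simp add: power2_eq_square field_simps)

lemma Rp_at_p_aux:
  assumes p: "p \<ge> 4"
  shows "poly (Rp p (Suc (Suc k))) (real p) \<le> poly (Rp p (Suc k)) (real p) \<and> poly (Rp p (Suc k)) (real p) < 0"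
proof (induction k)
  case 0
  have "real p * real p - (real p + 1) * real p + 1 < 0" using p by (simp add: algebra_simps)
  moreover have "(real p - 2) * (real p * real p - (real p + 1) * real p + 1) - (real p - 1) \<le> real p * real p - (real p + 1) * real p + 1"
  proof -
    have "3 * real p \<le> real p * real p" using p by (intro mult_right_mono) auto
    then show ?thesis by (simp add: algebra_simps)
  qed
  ultimately show ?case by (simp add: algebra_simps numeral_eq_Suc)
next
  case (Suc n)
  let ?R = "\<lambda>k. poly (Rp p k) (real p)"
  have e: "?R (Suc (Suc (Suc n))) = real p * ?R (Suc (Suc n)) - 2 * ?R (Suc (Suc n)) - ?R (Suc n)" by (simp add: algebra_simps)
  have "real p * ?R (Suc (Suc n)) \<le> 4 * ?R (Suc (Suc n))" using Suc p by (intro mult_right_mono_neg) auto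
  then show ?case using Suc e by linarith
qed

lemma Rp_at_p:
  assumes p: "p \<ge> 4" and n: "n \<ge> 1"
  shows "poly (Rp p (Suc n)) (real p) \<le> poly (Rp p n) (real p) \<and> poly (Rp p n) (real p) < 0"
  using Rp_at_p_aux[OF p, of "n - 1"] n by (cases n) auto

lemma Gm_at_p:
  assumes "p \<ge> 4" "m \<ge> 1"
  shows "poly (Gm p m) (real p) < 0"
  using Rp_at_p[OF assms] by (simp add: Gm_def)

lemma Rp_at_p2:
  assumes p: "p \<ge> 4"
  shows "0 < poly (Rp p n) (real p + 2) \<and> poly (Rp p n) (real p + 2) \<le> poly (Rp p (Suc n)) (real p + 2)"
proof (induction n)
  case 0
  have "(real p + 2) * (real p + 2) - (real p + 1) * (real p + 2) + 1 = real p + 3" by (simp add: algebra_simps)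
  then show ?case by (simp add: algebra_simps numeral_eq_Suc)
next
  case (Suc n)
  let ?R = "\<lambda>k. poly (Rp p k) (real p + 2)"
  have e: "?R (Suc (Suc n)) = real p * ?R (Suc n) - ?R n" by (simp add: algebra_simps)
  have "2 * ?R (Suc n) \<le> real p * ?R (Suc n)" using Suc p by (intro mult_right_mono) auto
  then show ?case using Suc e by linarith
qed

lemma Gm_at_p2:
  assumes "p \<ge> 4"
  shows "poly (Gm p m) (real p + 2) > 0"
  using Rp_at_p2[OF assms, of m] Rp_at_p2[OF assms, of "Suc m"] by (simp add: Gm_def)

lemma poly_split_roots:
  fixes f :: "real poly"
  assumes "distinct xs" "\<forall>x\<in>set xs. poly f x = 0" "degree f = length xs" "lead_coeff f = 1"
  shows "f = (\<Prod>x\<leftarrow>xs. [:-x,1:])"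
  using assms
proof (induction xs arbitrary: f)
  case Nil
  then have "f = [:coeff f 0:]" by (metis degree_0_id list.size(3))
  then show ?case using Nil by simp
next
  case (Cons a xs)
  have "poly f a = 0" using Cons by simp
  then obtain g where f: "f = [:-a,1:] * g" by (metis dvdE poly_eq_0_iff_dvd)
  have g0: "g \<noteq> 0" using f Cons.prems(4) by auto
  have "degree ([:-a,1:] * g) = degree [:-a,1:] + degree g" by (rule degree_mult_eq) (use g0 in auto)
  then have dg: "degree g = length xs" using Cons.prems(3) f by simp
  have "lead_coeff ([:-a,1:] * g) = lead_coeff [:-a,1:] * lead_coeff g" by (rule lead_coeff_mult)
  then have lg: "lead_coeff g = 1" using Cons.prems(4) f by simp
  have rg: "\<forall>x\<in>set xs. poly g x = 0"
  proof
    fix x assume x: "x \<in> set xs"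
    then have "x \<noteq> a" using Cons.prems(1) by auto
    moreover have "poly f x = 0" using Cons.prems(2) x by simp
    ultimately show "poly g x = 0" unfolding f by simp
  qed
  have "g = (\<Prod>x\<leftarrow>xs. [:-x,1:])" using Cons.IH[OF _ rg dg lg] Cons.prems(1) by simp
  then show ?case using f by simp
qed

lemma prod_lin_mset:
  fixes xs ys :: "real list"
  assumes "(\<Prod>x\<leftarrow>xs. [:-x,1:]) = (\<Prod>x\<leftarrow>ys. [:-x,1:])"
  shows "mset xs = mset ys"
  using assms
proof (induction xs arbitrary: ys)
  case Nil
  show ?case
  proof (cases ys)
    case (Cons y ys')
    have "poly (\<Prod>x\<leftarrow>ys. [:-x,1:]) y = 0" unfolding Cons by (simp add: poly_prod_list)
    then show ?thesis using Nil by simp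
  qed simp
next
  case (Cons a xs)
  have "poly (\<Prod>x\<leftarrow>ys. [:-x,1:]) a = 0" using Cons.prems[symmetric] by (simp add: poly_prod_list)
  then have a: "a \<in> set ys" by (auto simp: poly_prod_list prod_list_zero_iff)
  have "(\<Prod>x\<leftarrow>ys. [:-x,1:]) = [:-a,1:] * (\<Prod>x\<leftarrow>remove1 a ys. [:-x,1:])"
    using a by (rule prod_list_map_remove1)
  then have "[:-a,1:] * (\<Prod>x\<leftarrow>xs. [:-x,1:]) = [:-a,1:] * (\<Prod>x\<leftarrow>remove1 a ys. [:-x,1:])"
    using Cons.prems by simp
  moreover have nz: "[:-a,1:] \<noteq> (0::real poly)" by simp
  ultimately have "(\<Prod>x\<leftarrow>xs. [:-x,1:]) = (\<Prod>x\<leftarrow>remove1 a ys. [:-x,1:])" using mult_left_cancel by blast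
  then have "mset xs = mset (remove1 a ys)" by (rule Cons.IH)
  then show ?case using a by simp
qed

lemma eig_desc_unique:
  assumes s: "sorted_wrt (\<ge>) xs" and c: "char_poly A = (\<Prod>x\<leftarrow>xs. [:-x,1:])"
  shows "eigenvalues_desc A = xs"
  unfolding eigenvalues_desc_def
proof (rule the_equality)
  show "sorted_wrt (\<ge>) xs \<and> char_poly A = (\<Prod>x\<leftarrow>xs. [:-x,1:])" using s c by simp
next
  fix ys assume ys: "sorted_wrt (\<ge>) ys \<and> char_poly A = (\<Prod>x\<leftarrow>ys. [:-x,1:])"
  then have m: "mset (rev ys) = mset (rev xs)" using c prod_lin_mset[of ys xs] by simp
  have "sorted (rev ys)" "sorted (rev xs)" using ys s by (simp_all add: sorted_wrt_rev)
  then have "sort (rev xs) = rev ys" "sort (rev xs) = rev xs"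
    using properties_for_sort[OF m] properties_for_sort[of "rev xs" "rev xs"] by auto
  then show "ys = xs" by simp
qed

lemma sign_lemma:
  fixes ca cb ga gb e u v :: real
  assumes "ca > 0" "cb > 0" "ca * ga = e * u" "cb * gb = - e * v" "e^2 = 1" "u * v > 0"
  shows "ga * gb < 0"
proof -
  have "(ca * ga) * (cb * gb) = - (e^2) * (u * v)" using assms(3,4) by (simp add: power2_eq_square algebra_simps)
  then have "(ca * cb) * (ga * gb) < 0" using assms(5,6) by (simp add: algebra_simps)
  moreover have "ca * cb > 0" using assms by simp
  ultimately show ?thesis
    by (metis mult_nonneg_nonneg not_le less_le)
qed

lemma sorted_desc_map:
  fixes f :: "nat \<Rightarrow> real"
  assumes "\<And>i j. a \<le> i \<Longrightarrow> i < j \<Longrightarrow> j < n \<Longrightarrow> f i < f j"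
  shows "sorted_wrt (>) (map f (rev [a..<n]))"
  unfolding sorted_wrt_map sorted_wrt_rev
  by (rule sorted_wrt_mono_rel[OF _ sorted_wrt_upt]) (use assms in auto)

lemma sorted_wrt_gt_distinct:
  fixes xs :: "real list"
  shows "sorted_wrt (>) xs \<Longrightarrow> distinct xs"
  by (metis distinct_rev sorted_wrt_rev strict_sorted_iff)

lemma sorted_wrt_gt_ge:
  fixes xs :: "real list"
  shows "sorted_wrt (>) xs \<Longrightarrow> sorted_wrt (\<ge>) xs"
  by (rule sorted_wrt_mono_rel) auto

lemma sorted_wrt_replicate: "R x x \<Longrightarrow> sorted_wrt R (replicate n x)"
  by (induction n) auto

lemma Yp_0: "poly (Yp k) 0 = (-1) ^ k"
  by (induction k rule: induct2) auto

lemma yp_mono_le: "j \<le> k \<Longrightarrow> k < m \<Longrightarrow> yp m j \<le> yp m k"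
  using yp_mono[of j k m] by (cases "j = k") auto

lemma path_eig:
  assumes m: "m \<ge> 3"
  shows "eig (path_laplacian m) 1 > 2"
proof -
  define P where "P = Yp m + Yp (m - 1)"
  have cp: "char_poly (path_laplacian m) = P" unfolding P_def using m by (intro char_poly_path) auto
  have car: "path_laplacian m \<in> carrier_mat m m" by (simp add: path_laplacian_def graph_laplacian_def)
  have dP: "degree P = m" and lP: "lead_coeff P = 1" using degree_monic_char_poly[OF car] cp by auto
  have P0: "poly P 0 = 0" unfolding P_def using m by (cases m) (auto simp: Yp_0)
  have ex: "\<exists>x. yp m j < x \<and> x < yp m (Suc j) \<and> poly P x = 0" if j: "j < m - 1" for j
  proof -
    let ?a = "real (2 * j + 1) * pi / real (4 * m)"
    let ?b = "real (2 * Suc j + 1) * pi / real (4 * m)"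
    have ja: "j < m" "Suc j < m" using j by auto
    note A = angle_facts[OF yp_angle[OF ja(1)]] and B = angle_facts[OF yp_angle[OF ja(2)]]
    have "poly P (yp m j) * poly P (yp m (Suc j)) < 0"
    proof (rule sign_lemma)
      show "cos ?a * poly P (yp m j) = (-1) ^ (m + j + 1) * (2 * sin ?a)" unfolding P_def by (rule P_sample[OF ja(1)])
      show "cos ?b * poly P (yp m (Suc j)) = - ((-1) ^ (m + j + 1)) * (2 * sin ?b)" unfolding P_def using P_sample[OF ja(2)] by simp
      show "((-1::real) ^ (m + j + 1))^2 = 1" by (simp flip: power_mult)
      show "0 < 2 * sin ?a * (2 * sin ?b)" using A B by simp
    qed (use A B in auto)
    then show ?thesis using poly_IVT[of "yp m j" "yp m (Suc j)" P] yp_mono[of j "Suc j" m] ja by auto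
  qed
  define d where "d j = (SOME x. yp m j < x \<and> x < yp m (Suc j) \<and> poly P x = 0)" for j
  have d: "yp m j < d j \<and> d j < yp m (Suc j) \<and> poly P (d j) = 0" if "j < m - 1" for j
    unfolding d_def using someI_ex[OF ex[OF that]] .
  define ys where "ys = map d (rev [0..<m - 1]) @ [0]"
  have sd: "sorted_wrt (>) (map d (rev [0..<m - 1]))"
  proof (rule sorted_desc_map)
    fix i j assume "0 \<le> i" "i < j" "j < m - 1"
    then show "d i < d j" using d[of i] d[of j] yp_mono_le[of "Suc i" j m] by force
  qed
  have pos: "\<forall>y\<in>set (map d (rev [0..<m - 1])). 0 < y"
  proof
    fix y assume "y \<in> set (map d (rev [0..<m - 1]))"
    then obtain j where j: "j < m - 1" "y = d j" by auto
    then have "0 < yp m j" by (intro yp_pos) auto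
    then show "0 < y" using d[OF j(1)] j(2) by linarith
  qed
  have s: "sorted_wrt (>) ys" unfolding ys_def sorted_wrt_append using sd pos by auto
  have roots: "\<forall>x\<in>set ys. poly P x = 0" unfolding ys_def using d P0 by auto
  have len: "length ys = m" unfolding ys_def using m by simp
  have "P = (\<Prod>x\<leftarrow>ys. [:-x,1:])"
    by (rule poly_split_roots[OF sorted_wrt_gt_distinct[OF s] roots]) (use dP lP len in auto)
  then have "eigenvalues_desc (path_laplacian m) = ys"
    using cp sorted_wrt_gt_ge[OF s] by (intro eig_desc_unique) auto
  then have e1: "eig (path_laplacian m) 1 = d (m - 2)"
    unfolding eig_def ys_def using m by (simp add: nth_append rev_nth numeral_2_eq_2)
  have e2: "d (m - 2) > yp m (m - 2)" using d[of "m - 2"] m by simp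
  have e3: "yp m (m - 2) \<ge> 2"
  proof -
    have "sin (pi / 4) \<le> sin (real (2 * (m - 2) + 1) * pi / real (4 * m))"
    proof (rule sin_monotone_2pi_le)
      have "real m \<le> real (2 * (m - 2) + 1)" using m by simp
      then have "real m * pi \<le> real (2 * (m - 2) + 1) * pi" by (intro mult_right_mono) auto
      then show "pi / 4 \<le> real (2 * (m - 2) + 1) * pi / real (4 * m)" using m by (simp add: field_simps)
      show "real (2 * (m - 2) + 1) * pi / real (4 * m) \<le> pi / 2" using yp_angle[of "m - 2" m] m by simp
    qed simp
    then have "(sqrt 2 / 2) ^ 2 \<le> sin (real (2 * (m - 2) + 1) * pi / real (4 * m)) ^ 2"
      unfolding sin_45 by (intro power_mono) auto
    then show ?thesis unfolding yp_def by (simp add: power_divide)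
  qed
  show ?thesis using e1 e2 e3 by linarith
qed


lemma xg_v_neg:
  assumes "1 \<le> j" "j \<le> m" "p \<ge> 4"
  shows "xg m j * (xg m j - 2 * real p + 1) / 2 < 0"
proof -
  have "0 < xg m j" "xg m j < 4" using xg_bounds[OF assms(1,2)] by auto
  moreover have "xg m j - 2 * real p + 1 < 0" using calculation assms(3) by simp
  ultimately show ?thesis by (simp add: mult_pos_neg divide_neg_pos)
qed

lemma main_KC:
  fixes p m :: nat
  assumes p: "p \<ge> 4" and m: "m \<ge> 3"
  defines "L \<equiv> KC_laplacian p (Suc m)"
  shows "\<exists>b cs. eigenvalues_desc L = b # replicate (p - 2) (real p) @ cs \<and> real p < b \<and> b < real p + 2
     \<and> length cs = m + 1 \<and> 0 < cs ! 0 \<and> cs ! 0 < xg m m \<and> (\<forall>y\<in>set cs. 0 \<le> y \<and> y < xg m m)"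
proof -
  define G where "G = Gm p m"
  have p2: "p \<ge> 2" using p by simp
  have cp: "char_poly L = [:-real p,1:] ^ (p - 2) * G"
    unfolding L_def G_def Gm_def using p2 m by (intro char_poly_KC) auto
  have car: "L \<in> carrier_mat (p + m) (p + m)" by (simp add: L_def KC_laplacian_def graph_laplacian_def)
  have dcp: "degree (char_poly L) = p + m" and lcp: "lead_coeff (char_poly L) = 1"
    using degree_monic_char_poly[OF car] by auto
  have G0: "G \<noteq> 0" using lcp cp by auto
  have "degree ([:-real p,1:] ^ (p - 2) * G) = degree ([:-real p,1:] ^ (p - 2)) + degree G"
    by (rule degree_mult_eq) (use G0 in auto)
  then have dG: "degree G = m + 2" using dcp cp p2 by (simp add: degree_linear_power)
  have "lead_coeff ([:-real p,1:] ^ (p - 2) * G) = lead_coeff ([:-real p,1:] ^ (p - 2)) * lead_coeff G"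
    by (rule lead_coeff_mult)
  then have lG: "lead_coeff G = 1" using lcp cp by (simp add: lead_coeff_power)
  have "poly G 0 = 0" unfolding G_def by (rule Gm_0)
  then have "[:0,1:] dvd G" using poly_eq_0_iff_dvd[of G 0] by simp
  then obtain H where GH: "G = [:0,1:] * H" by (rule dvdE)
  have "pderiv G = [:0,1:] * pderiv H + H * pderiv [:0,1:]" unfolding GH by (rule pderiv_mult)
  then have H0: "poly H 0 = (-1) ^ (m + 1) * (real m + real p)"
    using Gm_deriv_0[of p m] unfolding G_def[symmetric] by (simp add: pderiv_pCons)
  have j1: "1 \<le> (1::nat)" "1 \<le> m" using m by auto
  note A1 = angle_facts[OF xg_angle[OF j1]]
  have x1: "0 < xg m 1" "xg m 1 < 4" using xg_bounds[OF j1] by auto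
  have "poly H 0 * poly H (xg m 1) < 0"
  proof (rule sign_lemma)
    show "1 * poly H 0 = (-1) ^ (m + 1) * (real m + real p)" using H0 by simp
    have "cos (real 1 * pi / real (2 * m + 1)) * poly G (xg m 1) = (-1) ^ (m + 1) * (xg m 1 * (xg m 1 - 2 * real p + 1) / 2)"
      unfolding G_def by (rule G_sample[OF j1])
    moreover have e: "poly G (xg m 1) = xg m 1 * poly H (xg m 1)" unfolding GH by simp
    ultimately show "(cos (real 1 * pi / real (2 * m + 1)) * xg m 1) * poly H (xg m 1) = - ((-1) ^ (m + 1)) * (- (xg m 1 * (xg m 1 - 2 * real p + 1) / 2))"
      by (simp only: e mult.assoc minus_mult_minus)
    show "((-1::real) ^ (m + 1))^2 = 1" by (simp flip: power_mult)
    show "0 < (real m + real p) * - (xg m 1 * (xg m 1 - 2 * real p + 1) / 2)"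
      using xg_v_neg[OF j1 p] m by (intro mult_pos_pos) auto
    show "0 < cos (real 1 * pi / real (2 * m + 1)) * xg m 1" using A1 x1 by simp
  qed simp
  then obtain r where r: "0 < r" "r < xg m 1" "poly H r = 0" using poly_IVT[of 0 "xg m 1" H] x1 by auto
  have Gr: "poly G r = 0" using r unfolding GH by simp
  have ex: "\<exists>x. xg m j < x \<and> x < xg m (Suc j) \<and> poly G x = 0" if j: "1 \<le> j" "j < m" for j
  proof -
    let ?a = "real j * pi / real (2 * m + 1)"
    let ?b = "real (Suc j) * pi / real (2 * m + 1)"
    have ja: "1 \<le> j" "j \<le> m" and jb: "1 \<le> Suc j" "Suc j \<le> m" using j by auto
    note A = angle_facts[OF xg_angle[OF ja]] and B = angle_facts[OF xg_angle[OF jb]]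
    have "poly G (xg m j) * poly G (xg m (Suc j)) < 0"
    proof (rule sign_lemma)
      show "cos ?a * poly G (xg m j) = (-1) ^ (m + j) * (xg m j * (xg m j - 2 * real p + 1) / 2)"
        unfolding G_def by (rule G_sample[OF ja])
      show "cos ?b * poly G (xg m (Suc j)) = - ((-1) ^ (m + j)) * (xg m (Suc j) * (xg m (Suc j) - 2 * real p + 1) / 2)"
        unfolding G_def using G_sample[OF jb] by simp
      show "((-1::real) ^ (m + j))^2 = 1" by (simp flip: power_mult)
      show "0 < xg m j * (xg m j - 2 * real p + 1) / 2 * (xg m (Suc j) * (xg m (Suc j) - 2 * real p + 1) / 2)"
        using xg_v_neg[OF ja p] xg_v_neg[OF jb p] by (intro mult_neg_neg) auto
    qed (use A B in auto)
    then show ?thesis using poly_IVT[of "xg m j" "xg m (Suc j)" G] xg_mono[of j "Suc j" m] j by auto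
  qed
  define c where "c j = (SOME x. xg m j < x \<and> x < xg m (Suc j) \<and> poly G x = 0)" for j
  have c: "xg m j < c j \<and> c j < xg m (Suc j) \<and> poly G (c j) = 0" if "1 \<le> j" "j < m" for j
    unfolding c_def using someI_ex[OF ex[OF that]] .
  obtain b where b: "real p < b" "b < real p + 2" "poly G b = 0"
    using poly_IVT_pos[of "real p" "real p + 2" G] Gm_at_p[OF p, of m] Gm_at_p2[OF p, of m] m
    unfolding G_def by auto
  have xm: "xg m m < 4" using xg_bounds[of m m] m by auto
  have xle: "xg m j \<le> xg m k" if "1 \<le> j" "j \<le> k" "k \<le> m" for j k
    using xg_mono[of j k m] that by (cases "j = k") auto
  define cs where "cs = map c (rev [1..<m]) @ [r, 0]"
  have cbounds: "xg m 1 < c j \<and> c j < xg m m" if "1 \<le> j" "j < m" for j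
    using c[OF that] xle[of 1 j] xle[of "Suc j" m] that by force
  have sc: "sorted_wrt (>) (map c (rev [1..<m]))"
  proof (rule sorted_desc_map)
    fix i j assume "1 \<le> i" "i < j" "j < m"
    then show "c i < c j" using c[of i] c[of j] xle[of "Suc i" j] by force
  qed
  have scs: "sorted_wrt (>) cs" unfolding cs_def sorted_wrt_append using sc cbounds r x1 by force
  have cs_bounds: "\<forall>y\<in>set cs. 0 \<le> y \<and> y < xg m m"
    unfolding cs_def using cbounds r x1 xle[of 1 m] m by force
  define gl where "gl = b # cs"
  have sgl: "sorted_wrt (>) gl" unfolding gl_def using scs cs_bounds b xm p by force
  have roots: "\<forall>x\<in>set gl. poly G x = 0" unfolding gl_def cs_def using b c Gr Gm_0[of p m] G_def by auto
  have "G = (\<Prod>x\<leftarrow>gl. [:-x,1:])"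
    by (rule poly_split_roots[OF sorted_wrt_gt_distinct[OF sgl] roots]) (use dG lG m in \<open>auto simp: gl_def cs_def\<close>)
  then have cpL: "char_poly L = (\<Prod>x\<leftarrow>(b # replicate (p - 2) (real p) @ cs). [:-x,1:])"
    unfolding cp gl_def by (simp add: ac_simps del: mult_pCons_left)
  have sxs: "sorted_wrt (\<ge>) (b # replicate (p - 2) (real p) @ cs)"
    using sorted_wrt_gt_ge[OF scs] cs_bounds b xm p
    by (auto simp: sorted_wrt_append sorted_wrt_replicate)
  have ev: "eigenvalues_desc L = b # replicate (p - 2) (real p) @ cs"
    by (rule eig_desc_unique[OF sxs cpL])
  have "Suc (m - Suc (Suc 0)) = m - Suc 0" using m by simp
  then have c0: "cs ! 0 = c (m - 1)" unfolding cs_def using m by (simp add: nth_append rev_nth)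
  have "0 < cs ! 0 \<and> cs ! 0 < xg m m"
  proof -
    have "xg m 1 < c (m - 1) \<and> c (m - 1) < xg m m" using m by (intro cbounds) auto
    then show ?thesis unfolding c0 using x1 by auto
  qed
  moreover have "length cs = m + 1" unfolding cs_def using m by simp
  ultimately show ?thesis using ev b cs_bounds by blast
qed


theorem lemma1:
  fixes p q :: nat
  assumes "p \<ge> 4" and "q \<ge> 4"
  defines "L \<equiv> KC_laplacian p q"
  shows "(p \<le> eig L 1 \<and> eig L 1 \<le> real p + 2)
    \<and> (\<forall>j \<in> {2..p-1}. eig L j = real p)
    \<and> (0 < eig L p \<and> eig L p < min (eig (path_laplacian (q - 1)) 1 + 2) (real p))
    \<and> (\<forall>j \<in> {p+1..p+q-1}. 0 \<le> eig L j \<and> eig L j < 4)"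
proof -
  define m where "m = q - 1"
  have m: "m \<ge> 3" and q: "q = Suc m" using assms(2) unfolding m_def by auto
  obtain b cs where ev: "eigenvalues_desc L = b # replicate (p - 2) (real p) @ cs"
    and b: "real p < b" "b < real p + 2" and len: "length cs = m + 1"
    and c0: "0 < cs ! 0" "cs ! 0 < xg m m" and cs: "\<forall>y\<in>set cs. 0 \<le> y \<and> y < xg m m"
    using main_KC[OF assms(1) m] unfolding L_def q by blast
  have xm: "xg m m < 4" using xg_bounds[of m m] m by auto
  have mu: "eig (path_laplacian (q - 1)) 1 > 2" using path_eig[OF m] unfolding m_def .
  have nth: "eig L j = (if j - 2 < p - 2 then real p else cs ! (j - 2 - (p - 2)))" if "j \<ge> 2" for j
  proof -
    have "j - 1 = Suc (j - 2)" using that by simp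
    then show ?thesis unfolding eig_def ev by (simp add: nth_append)
  qed
  have 1: "eig L 1 = b" unfolding eig_def ev by simp
  have 2: "\<forall>j \<in> {2..p-1}. eig L j = real p"
  proof
    fix j assume "j \<in> {2..p-1}"
    then have "j \<ge> 2" "j - 2 < p - 2" by auto
    then show "eig L j = real p" using nth by simp
  qed
  have 3: "eig L p = cs ! 0" using nth[of p] assms(1) by simp
  have 4: "\<forall>j \<in> {p+1..p+q-1}. 0 \<le> eig L j \<and> eig L j < 4"
  proof
    fix j assume j: "j \<in> {p+1..p+q-1}"
    then have "j \<ge> 2" "\<not> j - 2 < p - 2" "j - 2 - (p - 2) < length cs" using assms(1) len q by auto
    then have "eig L j \<in> set cs" using nth by simp
    then show "0 \<le> eig L j \<and> eig L j < 4" using cs xm by fastforce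
  qed
  show ?thesis using 1 2 3 4 b c0 xm mu assms(1) by auto
qed

end
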